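(* Let $\mu>1/2$, $0<\nu<1/2$, $g\in X$, and $f=F-(\mu-\nu)\theta$. Then: (1) there is a constant $c(\mu,\nu)$ depending only on $\mu,\nu$ such that $$|f(x)|\le c(\mu,\nu)e^{4\|g\|_\infty}|x|^{1-2\mu}+(\mu-\nu)|x|^{-1}\quad(|x|\ge1),\qquad |f(x)|\le 2(\mu-\nu)\pi\quad(x\in\mathbb{R}),$$ $$|f'(x)|\le c(\mu,\nu)e^{4\|g\|_\infty}\frac{1}{|x|^{2\nu}(x^2+1)^{\mu-\nu}}+(\mu-\nu)\frac1{x^2+1}\quad(x\ne0);$$ (2) if $\|g\|_\infty\le M$, then there is a constant $c(\mu,\nu,M)$ depending only on $\mu,\nu,M$ such that $$|T[g](x)|\le c(\mu,\nu,M)\big(|x|^{1/2-\mu}+|x|^{-1/2}\big)\quad\text{for }|x|\ge4.$$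
   Context: $X=\{g\in C(\mathbb{R})\cap L^\infty(\mathbb{R})\text{ real}:\ \lim_{x\to\pm\infty}g(x)=0\}$ with sup norm. $\theta:\mathbb{R}\to\mathbb{R}$ is the continuous branch of $\arg(x-i)$ in $(-\pi,0)$: $\theta(x)=\arctan(-1/x)$ for $x>0$, $\theta(0)=-\pi/2$, $\theta(x)=\arctan(-1/x)-\pi$ for $x<0$. For $g\in X$: $h^{-1}(0)=0$, $(h^{-1})'(x)=|x|^{\nu-1}(x^2+1)^{(\mu-\nu)/2}e^{g(x)}$; $\kappa>0$ with $\int_{\mathbb{R}}\frac{\kappa}{x h^{-1}(x)(h^{-1})'(x)}dx=(\mu-\nu)\pi$; $F$ continuous with $F'(x)=\frac{\kappa}{xh^{-1}(x)(h^{-1})'(x)}$ ($x\neq0$) and $F(+\infty)=0$ (so $F(-\infty)=-(\mu-\nu)\pi$); $T[g]=H(F-(\mu-\nu)\theta)$ with $H$ the Hilbert transform $Hf(x)=\frac1\pi\mathrm{p.v.}\int\frac{f(y)}{x-y}dy$. *)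

theory Defs
  imports "HOL-Analysis.Analysis"
begin

definition Xspace :: "(real \<Rightarrow> real) set" where
  "Xspace = {g. continuous_on UNIV g \<and> bounded (range g) \<and>
               (g \<longlongrightarrow> 0) at_top \<and> (g \<longlongrightarrow> 0) at_bot}"

definition supnorm :: "(real \<Rightarrow> real) \<Rightarrow> real" where
  "supnorm g = (SUP x. \<bar>g x\<bar>)"

text \<open>Continuous branch of arg(x - i) with values in (-pi, 0).\<close>
definition theta :: "real \<Rightarrow> real" where
  "theta x = (if x > 0 then arctan (-1/x) else if x = 0 then - pi / 2
              else arctan (-1/x) - pi)"

definition hdens :: "real \<Rightarrow> real \<Rightarrow> (real \<Rightarrow> real) \<Rightarrow> real \<Rightarrow> real" where
  "hdens \<mu> \<nu> g x = \<bar>x\<bar> powr (\<nu> - 1) * (x\<^sup>2 + 1) powr ((\<mu> - \<nu>) / 2) * exp (g x)"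

definition admissible ::
  "real \<Rightarrow> real \<Rightarrow> (real \<Rightarrow> real) \<Rightarrow> (real \<Rightarrow> real) \<Rightarrow> real \<Rightarrow> (real \<Rightarrow> real) \<Rightarrow> bool" where
  "admissible \<mu> \<nu> g hinv \<kappa> F \<longleftrightarrow>
     continuous_on UNIV hinv \<and> hinv 0 = 0 \<and>
     (\<forall>x. x \<noteq> 0 \<longrightarrow> (hinv has_real_derivative hdens \<mu> \<nu> g x) (at x)) \<and>
     \<kappa> > 0 \<and>
     integrable lborel (\<lambda>x. \<kappa> / (x * hinv x * hdens \<mu> \<nu> g x)) \<and>
     integral\<^sup>L lborel (\<lambda>x. \<kappa> / (x * hinv x * hdens \<mu> \<nu> g x)) = (\<mu> - \<nu>) * pi \<and>
     continuous_on UNIV F \<and>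
     (\<forall>x. x \<noteq> 0 \<longrightarrow> (F has_real_derivative \<kappa> / (x * hinv x * hdens \<mu> \<nu> g x)) (at x)) \<and>
     (F \<longlongrightarrow> 0) at_top"

definition hilbert :: "(real \<Rightarrow> real) \<Rightarrow> real \<Rightarrow> real" where
  "hilbert f x = (1 / pi) *
     Lim (at_right 0) (\<lambda>\<epsilon>. LINT y:{y. \<epsilon> < \<bar>x - y\<bar>}|lborel. f y / (x - y))"

end

theory Submission
  imports Defs
begin


lemma cmp_deriv:
  fixes u v u' v' :: "real \<Rightarrow> real"
  assumes "a \<le> b" "continuous_on {a..b} u" "continuous_on {a..b} v"
    "\<And>x. a < x \<Longrightarrow> x < b \<Longrightarrow> (u has_real_derivative u' x) (at x)"
    "\<And>x. a < x \<Longrightarrow> x < b \<Longrightarrow> (v has_real_derivative v' x) (at x)"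
    "\<And>x. a < x \<Longrightarrow> x < b \<Longrightarrow> u' x \<le> v' x"
  shows "u b - u a \<le> v b - v a"
proof -
  have "(\<lambda>x. v x - u x) a \<le> (\<lambda>x. v x - u x) b"
  proof (rule DERIV_nonneg_imp_increasing_open[OF assms(1)])
    fix x assume "a < x" "x < b"
    then show "\<exists>y. ((\<lambda>x. v x - u x) has_real_derivative y) (at x) \<and> 0 \<le> y"
      using assms(4-6) by (intro exI[of _ "v' x - u' x"]) (auto intro: derivative_intros)
  next
    show "continuous_on {a..b} (\<lambda>x. v x - u x)" using assms(2,3) by (intro continuous_intros)
  qed
  then show ?thesis by simp
qed

lemma theta_pos: "x > 0 \<Longrightarrow> theta x = - arctan (1/x)"
  by (simp add: theta_def arctan_minus)
lemma theta_neg: "x < 0 \<Longrightarrow> theta x = arctan (1/\<bar>x\<bar>) - pi"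
  by (simp add: theta_def)

lemma theta_range: "- pi \<le> theta x \<and> theta x \<le> 0"
proof -
  consider "x > 0" | "x = 0" | "x < 0" by linarith
  then show ?thesis
  proof cases
    case 1
    then show ?thesis using arctan_bounded[of "1/x"] arctan_monotone'[of 0 "1/x"] by (simp add: theta_pos)
  next
    case 2 then show ?thesis by (simp add: theta_def)
  next
    case 3
    then show ?thesis using arctan_bounded[of "1/\<bar>x\<bar>"] arctan_monotone'[of 0 "1/\<bar>x\<bar>"] by (simp add: theta_neg)
  qed
qed

lemma theta_deriv:
  assumes "x \<noteq> 0" shows "(theta has_real_derivative 1/(x\<^sup>2+1)) (at x)"
proof (cases "x > 0")
  case True
  have d: "((\<lambda>t. - arctan (1/t)) has_real_derivative 1/(x\<^sup>2+1)) (at x)"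
    using True by (auto intro!: derivative_eq_intros simp: field_simps power2_eq_square)
  show ?thesis
    by (rule has_field_derivative_transform_within_open[OF d, of "{0<..}"]) (use True in \<open>auto simp: theta_pos\<close>)
next
  case False
  then have xn: "x < 0" using assms by simp
  have d: "((\<lambda>t. arctan (-1/t) - pi) has_real_derivative 1/(x\<^sup>2+1)) (at x)"
    using xn by (auto intro!: derivative_eq_intros simp: field_simps power2_eq_square)
  show ?thesis
    by (rule has_field_derivative_transform_within_open[OF d, of "{..<0}"]) (use xn in \<open>auto simp: theta_def\<close>)
qed

lemma theta_large_pos: "x \<ge> 1 \<Longrightarrow> \<bar>theta x\<bar> \<le> 1/x"
  using abs_arctan_le[of "1/x"] by (simp add: theta_pos)

lemma theta_large_neg: "x \<le> -1 \<Longrightarrow> 0 \<le> theta x + pi \<and> theta x + pi \<le> 1/\<bar>x\<bar>"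
  using arctan_le_self[of "1/\<bar>x\<bar>"] arctan_monotone'[of 0 "1/\<bar>x\<bar>"] by (simp add: theta_neg)

lemma theta_measurable[measurable]: "theta \<in> borel_measurable borel"
  unfolding theta_def by measurable

lemma supnorm_ge: assumes "g \<in> Xspace" shows "\<bar>g x\<bar> \<le> supnorm g"
proof -
  have "bounded (range g)" using assms by (simp add: Xspace_def)
  then have "bdd_above (range (\<lambda>x. \<bar>g x\<bar>))"
    by (auto simp: bounded_iff bdd_above_def)
  then show ?thesis unfolding supnorm_def by (rule cSUP_upper[rotated]) simp
qed



lemma hk_to_lborel:
  fixes m :: "real \<Rightarrow> real"
  assumes "m \<in> borel_measurable borel" "(m has_integral V) UNIV" "\<And>x. 0 \<le> m x"
  shows "integrable lborel m" "integral\<^sup>L lborel m = V"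
proof -
  have "m absolutely_integrable_on UNIV"
    using assms by (intro nonnegative_absolutely_integrable_1) (auto simp: integrable_on_def)
  then have "integrable lebesgue m" by (simp add: set_integrable_def)
  then show i: "integrable lborel m"
    using integrable_completion[of m lborel] assms(1) by simp
  show "integral\<^sup>L lborel m = V"
    using has_integral_integral_lborel[OF i] assms(2) by (rule has_integral_unique)
qed

lemma int_pow_center:
  fixes c g :: real assumes "c > 0" "0 < g" "g < 1"
  shows "((\<lambda>y. \<bar>y\<bar> powr (-g)) has_integral (2 * (c powr (1 - g) / (1 - g)))) {-c..c}"
proof -
  have 1: "((\<lambda>y. y powr (-g)) has_integral (c powr (-g + 1) / (-g + 1))) {0..c}"
    using assms by (intro has_integral_powr_from_0) auto
  have 2: "((\<lambda>y. \<bar>y\<bar> powr (-g)) has_integral (c powr (1 - g) / (1 - g))) {0..c}"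
  proof -
    have 1: "((\<lambda>y. \<bar>y\<bar> powr (-g)) has_integral (c powr (-g + 1) / (-g + 1))) {0..c}"
      by (rule has_integral_eq[OF _ 1]) auto
    have e: "-g + 1 = 1 - g" by simp
    show ?thesis using 1 unfolding e .
  qed
  have 3: "((\<lambda>x. (\<lambda>y. \<bar>y\<bar> powr (-g)) (-x)) has_integral (c powr (1 - g) / (1 - g))) {-c..-0}"
    by (rule has_integral_reflect_lemma_real[OF 2])
  have h3b: "((\<lambda>y. \<bar>y\<bar> powr (-g)) has_integral (c powr (1 - g) / (1 - g))) {-c..0}"
    by (rule has_integral_eq[OF _ 3[unfolded minus_zero]]) simp
  have "((\<lambda>y. \<bar>y\<bar> powr (-g)) has_integral (c powr (1 - g) / (1 - g) + c powr (1 - g) / (1 - g))) {-c..c}"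
    by (rule has_integral_combine[OF _ _ h3b 2]) (use assms in auto)
  then show ?thesis by (simp only: mult_2)
qed


lemma int_pow_tail_pos:
  fixes c g :: real assumes "c > 0" "0 < g"
  shows "((\<lambda>y. \<bar>y\<bar> powr (-1-g)) has_integral (c powr (-g) / g)) {c..}"
proof -
  have 1: "((\<lambda>y. y powr (-1-g)) has_integral (-(c powr (-1-g+1)) / (-1-g+1))) {c..}"
    using assms by (intro has_integral_powr_to_inf) auto
  have "((\<lambda>y. \<bar>y\<bar> powr (-1-g)) has_integral (-(c powr (-1-g+1)) / (-1-g+1))) {c..}"
    using has_integral_eq[of "{c..}" "\<lambda>y. y powr (-1-g)" "\<lambda>y. \<bar>y\<bar> powr (-1-g)", OF _ 1] assms
    by simp
  moreover have "-(c powr (-1-g+1)) / (-1-g+1) = c powr (-g) / g" using assms by (simp add: divide_simps)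
  ultimately show ?thesis by simp
qed

lemma L_center:
  fixes c g k :: real assumes "c > 0" "0 < g" "g < 1" "0 \<le> k"
  shows "integrable lborel (\<lambda>y. if \<bar>y\<bar> \<le> c then k * \<bar>y\<bar> powr (-g) else 0)"
    "integral\<^sup>L lborel (\<lambda>y. if \<bar>y\<bar> \<le> c then k * \<bar>y\<bar> powr (-g) else 0) = k * (2 * (c powr (1 - g) / (1 - g)))"
proof -
  have "((\<lambda>y. k * \<bar>y\<bar> powr (-g)) has_integral (k * (2 * (c powr (1 - g) / (1 - g))))) {-c..c}"
    by (rule has_integral_mult_right[OF int_pow_center[OF assms(1-3)]])
  then have "((\<lambda>y. if y \<in> {-c..c} then k * \<bar>y\<bar> powr (-g) else 0) has_integral (k * (2 * (c powr (1 - g) / (1 - g))))) UNIV"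
    by (subst has_integral_restrict_UNIV)
  moreover have "(\<lambda>y. if y \<in> {-c..c} then k * \<bar>y\<bar> powr (-g) else 0) = (\<lambda>y. if \<bar>y\<bar> \<le> c then k * \<bar>y\<bar> powr (-g) else 0)"
    by (auto simp: abs_le_iff)
  ultimately have H: "((\<lambda>y. if \<bar>y\<bar> \<le> c then k * \<bar>y\<bar> powr (-g) else 0) has_integral (k * (2 * (c powr (1 - g) / (1 - g))))) UNIV"
    by simp
  have M: "(\<lambda>y. if \<bar>y\<bar> \<le> c then k * \<bar>y\<bar> powr (-g) else 0) \<in> borel_measurable borel" by measurable
  show "integrable lborel (\<lambda>y. if \<bar>y\<bar> \<le> c then k * \<bar>y\<bar> powr (-g) else 0)"
    "integral\<^sup>L lborel (\<lambda>y. if \<bar>y\<bar> \<le> c then k * \<bar>y\<bar> powr (-g) else 0) = k * (2 * (c powr (1 - g) / (1 - g)))"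
    using hk_to_lborel[OF M H] assms by auto
qed

lemma L_tail:
  fixes c g k :: real assumes "c > 0" "0 < g" "0 \<le> k"
  shows "integrable lborel (\<lambda>y. if c \<le> \<bar>y\<bar> then k * \<bar>y\<bar> powr (-1-g) else 0)"
    "integral\<^sup>L lborel (\<lambda>y. if c \<le> \<bar>y\<bar> then k * \<bar>y\<bar> powr (-1-g) else 0) = 2 * (k * (c powr (-g) / g))"
proof -
  define p where "p y = (if c \<le> y then k * \<bar>y\<bar> powr (-1-g) else 0)" for y
  have "((\<lambda>y. k * \<bar>y\<bar> powr (-1-g)) has_integral (k * (c powr (-g) / g))) {c..}"
    by (rule has_integral_mult_right[OF int_pow_tail_pos[OF assms(1,2)]])
  then have "((\<lambda>y. if y \<in> {c..} then k * \<bar>y\<bar> powr (-1-g) else 0) has_integral (k * (c powr (-g) / g))) UNIV"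
    by (subst has_integral_restrict_UNIV)
  then have H: "(p has_integral (k * (c powr (-g) / g))) UNIV"
    unfolding p_def by simp
  have M: "p \<in> borel_measurable borel" unfolding p_def[abs_def] by measurable
  have ip: "integrable lborel p" and vp: "integral\<^sup>L lborel p = k * (c powr (-g) / g)"
    using hk_to_lborel[OF M H] assms unfolding p_def by auto
  have ipm: "integrable lborel (\<lambda>y. p (0 + (-1) * y))"
    using lborel_integrable_real_affine[OF ip, of "-1" 0] by simp
  have vpm: "integral\<^sup>L lborel (\<lambda>y. p (0 + (-1) * y)) = k * (c powr (-g) / g)"
    using lborel_integral_real_affine[of "-1" p 0] vp by simp
  have eq: "(\<lambda>y. if c \<le> \<bar>y\<bar> then k * \<bar>y\<bar> powr (-1-g) else 0) = (\<lambda>y. p y + p (0 + (-1) * y))"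
    using assms(1) by (auto simp: p_def fun_eq_iff)
  show "integrable lborel (\<lambda>y. if c \<le> \<bar>y\<bar> then k * \<bar>y\<bar> powr (-1-g) else 0)"
    unfolding eq using ip ipm by simp
  show "integral\<^sup>L lborel (\<lambda>y. if c \<le> \<bar>y\<bar> then k * \<bar>y\<bar> powr (-1-g) else 0) = 2 * (k * (c powr (-g) / g))"
    unfolding eq using ip ipm vp vpm by simp
qed


lemma mvt_abs_bound:
  fixes f f' :: "real \<Rightarrow> real"
  assumes "\<And>t. min x y \<le> t \<Longrightarrow> t \<le> max x y \<Longrightarrow> (f has_real_derivative f' t) (at t)"
    and "\<And>t. min x y \<le> t \<Longrightarrow> t \<le> max x y \<Longrightarrow> \<bar>f' t\<bar> \<le> L"
  shows "\<bar>f y - f x\<bar> \<le> L * \<bar>y - x\<bar>"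
proof (cases "x = y")
  case True
  have "0 \<le> \<bar>f' x\<bar>" by simp
  then show ?thesis using True by simp
next
  case False
  have main: "\<bar>f b - f a\<bar> \<le> L * (b - a)" if ab: "a < b" "min x y = a" "max x y = b" for a b
  proof -
    obtain z where z: "a < z" "z < b" "f b - f a = (b - a) * f' z"
      using MVT2[OF ab(1), of f f'] assms ab by force
    have "\<bar>f' z\<bar> \<le> L" using assms(2)[of z] z ab by auto
    then have "\<bar>b - a\<bar> * \<bar>f' z\<bar> \<le> \<bar>b - a\<bar> * L" by (intro mult_left_mono) auto
    moreover have "\<bar>f b - f a\<bar> = \<bar>b - a\<bar> * \<bar>f' z\<bar>" using z by (simp add: abs_mult)
    ultimately show ?thesis using ab by (simp add: mult.commute)
  qed
  show ?thesis
  proof (cases "x < y")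
    case True then show ?thesis using main[of x y] by simp
  next
    case F: False
    then have "y < x" using False by simp
    then show ?thesis using main[of y x] by (simp add: abs_minus_commute)
  qed
qed

lemma bounded_set_integral:
  fixes phi :: "real \<Rightarrow> real"
  assumes [measurable]: "phi \<in> borel_measurable borel" "S \<in> sets borel"
    and S: "S \<subseteq> {a..b}" and ab: "a \<le> b" and L0: "0 \<le> L" and bd: "\<And>y. y \<in> S \<Longrightarrow> \<bar>phi y\<bar> \<le> L"
  shows "set_integrable lborel S phi" "\<bar>LINT y:S|lborel. phi y\<bar> \<le> L * (b - a)"
proof -
  have ic: "integrable lborel (\<lambda>y. L * indicator {a..b} y :: real)"
    by (intro integrable_mult_right integrable_real_indicator) (auto simp: emeasure_lborel_Icc_eq)
  have vc: "integral\<^sup>L lborel (\<lambda>y. L * indicator {a..b} y :: real) = L * (b - a)"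
    using ab by simp
  have pw: "norm (indicator S y *\<^sub>R phi y) \<le> L * indicator {a..b} y" for y
    using S bd[of y] L0 by (auto split: split_indicator)
  have pw': "norm (indicator S y *\<^sub>R phi y) \<le> norm (L * indicator {a..b} y)" for y
    using pw[of y] by (smt (verit) norm_ge_zero real_norm_def)
  show si: "set_integrable lborel S phi"
    unfolding set_integrable_def
    by (rule Bochner_Integration.integrable_bound[OF ic]) (use pw' in auto)
  have "\<bar>LINT y:S|lborel. phi y\<bar> = norm (integral\<^sup>L lborel (\<lambda>y. indicator S y *\<^sub>R phi y))"
    by (simp add: set_lebesgue_integral_def)
  also have "\<dots> \<le> integral\<^sup>L lborel (\<lambda>y. norm (indicator S y *\<^sub>R phi y))"
    by (rule integral_norm_bound)
  also have "\<dots> \<le> integral\<^sup>L lborel (\<lambda>y. L * indicator {a..b} y)"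
    using si unfolding set_integrable_def
    by (intro integral_mono[OF _ ic] pw) auto
  finally show "\<bar>LINT y:S|lborel. phi y\<bar> \<le> L * (b - a)" using vc ab by (simp split: if_splits)
qed

lemma pv_zero:
  fixes x e R :: real
  shows "(LINT y:{y. e < \<bar>x - y\<bar> \<and> \<bar>x - y\<bar> < R}|lborel. 1 / (x - y)) = 0"
proof -
  define S where "S = {y. e < \<bar>x - y\<bar> \<and> \<bar>x - y\<bar> < R}"
  define phi where "phi y = indicator S y *\<^sub>R (1 / (x - y) :: real)" for y
  have "integral\<^sup>L lborel phi = \<bar>-1\<bar> *\<^sub>R integral\<^sup>L lborel (\<lambda>y. phi (2 * x + (-1) * y))"
    by (rule lborel_integral_real_affine) simp
  also have "(\<lambda>y. phi (2 * x + (-1) * y)) = (\<lambda>y. - phi y)"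
  proof
    fix y
    have "2 * x + (-1) * y \<in> S \<longleftrightarrow> y \<in> S" unfolding S_def by (simp add: abs_minus_commute)
    moreover have "1 / (x - (2 * x + (-1) * y)) = - (1 / (x - y))"
    proof -
      have "x - (2 * x + (-1) * y) = - (x - y)" by simp
      then show ?thesis by (simp only: divide_minus_right)
    qed
    ultimately show "phi (2 * x + (-1) * y) = - phi y" unfolding phi_def
      by (simp split: split_indicator)
  qed
  finally have "integral\<^sup>L lborel phi = - integral\<^sup>L lborel phi" by simp
  then have "integral\<^sup>L lborel phi = 0" by simp
  then show ?thesis unfolding set_lebesgue_integral_def phi_def S_def .
qed

lemma hilbert_generic:
  fixes f f' :: "real \<Rightarrow> real" and B B' gm x :: real
  assumes gm: "0 < gm" "gm < 1" and B: "0 \<le> B" "0 \<le> B'"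
    and fm[measurable]: "f \<in> borel_measurable borel"
    and fb: "\<And>y. y \<noteq> 0 \<Longrightarrow> \<bar>f y\<bar> \<le> B * \<bar>y\<bar> powr (-gm)"
    and fd: "\<And>y. 1 \<le> \<bar>y\<bar> \<Longrightarrow> (f has_real_derivative f' y) (at y)"
    and fdb: "\<And>y. 1 \<le> \<bar>y\<bar> \<Longrightarrow> \<bar>f' y\<bar> \<le> B' * \<bar>y\<bar> powr (-1-gm)"
    and x: "4 \<le> \<bar>x\<bar>"
  shows "\<bar>hilbert f x\<bar> \<le> (8 * B / (1 - gm) + 4 * B / gm + 4 * B') * \<bar>x\<bar> powr (-gm)"
proof -
  define R where "R = \<bar>x\<bar> / 2"
  have R: "2 \<le> R" "0 < R" "\<bar>x\<bar> = 2 * R" using x by (auto simp: R_def)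
  define h where "h y = f y / (x - y)" for y
  define q where "q y = (f y - f x) / (x - y)" for y
  define A where "A = {y. R \<le> \<bar>x - y\<bar>}"
  define N where "N e = {y. e < \<bar>x - y\<bar> \<and> \<bar>x - y\<bar> < R}" for e
  define m where "m y = (if \<bar>y\<bar> \<le> 4 * R then (B / R) * \<bar>y\<bar> powr (-gm) else 0)
      + (if 4 * R \<le> \<bar>y\<bar> then (2 * B) * \<bar>y\<bar> powr (-1-gm) else 0)" for y
  define L where "L = B' * R powr (-1-gm)"
  have L0: "0 \<le> L" using B by (simp add: L_def)
  have [measurable]: "h \<in> borel_measurable borel" unfolding h_def[abs_def] by measurable
  have [measurable]: "q \<in> borel_measurable borel" unfolding q_def[abs_def] by measurable
  have [measurable]: "A \<in> sets borel" unfolding A_def by measurable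
  have [measurable]: "N e \<in> sets borel" for e unfolding N_def by measurable
  have mi1: "integrable lborel (\<lambda>y. if \<bar>y\<bar> \<le> 4 * R then (B / R) * \<bar>y\<bar> powr (-gm) else 0)"
    and mv1: "integral\<^sup>L lborel (\<lambda>y. if \<bar>y\<bar> \<le> 4 * R then (B / R) * \<bar>y\<bar> powr (-gm) else 0)
         = (B / R) * (2 * ((4 * R) powr (1 - gm) / (1 - gm)))"
    using L_center[of "4 * R" gm "B / R"] R gm B by auto
  have mi2: "integrable lborel (\<lambda>y. if 4 * R \<le> \<bar>y\<bar> then (2 * B) * \<bar>y\<bar> powr (-1-gm) else 0)"
    and mv2: "integral\<^sup>L lborel (\<lambda>y. if 4 * R \<le> \<bar>y\<bar> then (2 * B) * \<bar>y\<bar> powr (-1-gm) else 0)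
         = 2 * ((2 * B) * ((4 * R) powr (-gm) / gm))"
    using L_tail[of "4 * R" gm "2 * B"] R gm B by auto
  have mi: "integrable lborel m" unfolding m_def[abs_def] using mi1 mi2 by (rule Bochner_Integration.integrable_add)
  have mv: "integral\<^sup>L lborel m = (B / R) * (2 * ((4 * R) powr (1 - gm) / (1 - gm))) + 2 * ((2 * B) * ((4 * R) powr (-gm) / gm))"
    unfolding m_def[abs_def] using mi1 mi2 mv1 mv2 by simp
  have m0: "0 \<le> m y" for y unfolding m_def using B R by simp
  have hA: "\<bar>h y\<bar> \<le> m y" if y: "y \<in> A" "y \<noteq> 0" for y
  proof -
    have d: "R \<le> \<bar>x - y\<bar>" using y by (simp add: A_def)
    have fy: "\<bar>f y\<bar> \<le> B * \<bar>y\<bar> powr (-gm)" using fb y by simp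
    have fy0: "0 \<le> B * \<bar>y\<bar> powr (-gm)" using B by simp
    show ?thesis
    proof (cases "\<bar>y\<bar> \<le> 4 * R")
      case True
      have "\<bar>h y\<bar> = \<bar>f y\<bar> / \<bar>x - y\<bar>" by (simp add: h_def abs_divide)
      also have "\<dots> \<le> B * \<bar>y\<bar> powr (-gm) / R"
        using fy fy0 d R by (intro frac_le) auto
      also have "\<dots> \<le> m y" unfolding m_def using True B R by simp
      finally show ?thesis .
    next
      case False
      have d2: "\<bar>y\<bar> / 2 \<le> \<bar>x - y\<bar>" using False R by linarith
      have yp: "0 < \<bar>y\<bar> / 2" using y by simp
      have "\<bar>h y\<bar> = \<bar>f y\<bar> / \<bar>x - y\<bar>" by (simp add: h_def abs_divide)
      also have "\<dots> \<le> B * \<bar>y\<bar> powr (-gm) / (\<bar>y\<bar> / 2)"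
        using fy fy0 d2 yp by (intro frac_le) auto
      also have "\<dots> = (2 * B) * \<bar>y\<bar> powr (-1-gm)"
        using y by (simp add: powr_diff powr_minus field_simps)
      also have "\<dots> \<le> m y" unfolding m_def using False B R by simp
      finally show ?thesis .
    qed
  qed
  have AE_hA: "AE y in lborel. norm (indicator A y *\<^sub>R h y) \<le> norm (m y)"
    using AE_lborel_singleton[of 0]
    by eventually_elim (use hA m0 in \<open>auto split: split_indicator\<close>)
  have AE_hA': "AE y in lborel. norm (indicator A y *\<^sub>R h y) \<le> m y"
    using AE_hA by eventually_elim (use m0 in simp)
  have iA: "set_integrable lborel A h"
    unfolding set_integrable_def by (rule Bochner_Integration.integrable_bound[OF mi _ AE_hA]) measurable
  have bA: "\<bar>LINT y:A|lborel. h y\<bar> \<le> integral\<^sup>L lborel m"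
  proof -
    have "\<bar>LINT y:A|lborel. h y\<bar> = norm (integral\<^sup>L lborel (\<lambda>y. indicator A y *\<^sub>R h y))"
      by (simp add: set_lebesgue_integral_def)
    also have "\<dots> \<le> integral\<^sup>L lborel (\<lambda>y. norm (indicator A y *\<^sub>R h y))"
      by (rule integral_norm_bound)
    also have "\<dots> \<le> integral\<^sup>L lborel m"
      using iA unfolding set_integrable_def
      by (intro integral_mono_AE[OF _ mi]) (use AE_hA' in \<open>auto\<close>)
    finally show ?thesis .
  qed
  have qb: "\<bar>q y\<bar> \<le> L" if y: "\<bar>x - y\<bar> < R" for y
  proof -
    have tb: "R \<le> \<bar>t\<bar>" if t: "min x y \<le> t" "t \<le> max x y" for t
    proof -
      have "\<bar>t - x\<bar> \<le> \<bar>y - x\<bar>" using t by (auto simp: min_def max_def split: if_splits)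
      then show ?thesis using y R by linarith
    qed
    have "\<bar>f y - f x\<bar> \<le> L * \<bar>y - x\<bar>"
    proof (rule mvt_abs_bound[where f'=f'])
      fix t assume t: "min x y \<le> t" "t \<le> max x y"
      show "(f has_real_derivative f' t) (at t)" using tb[OF t] R by (intro fd) auto
      have "\<bar>f' t\<bar> \<le> B' * \<bar>t\<bar> powr (-1-gm)" using tb[OF t] R by (intro fdb) auto
      also have "\<dots> \<le> B' * R powr (-1-gm)"
        using tb[OF t] R gm B by (intro mult_left_mono powr_mono2') auto
      finally show "\<bar>f' t\<bar> \<le> L" by (simp add: L_def)
    qed
    then show ?thesis
    proof (cases "y = x")
      case False
      then show ?thesis using \<open>\<bar>f y - f x\<bar> \<le> L * \<bar>y - x\<bar>\<close>
        by (simp add: q_def abs_divide divide_le_eq abs_minus_commute)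
    qed (simp add: q_def L0)
  qed
  have Nsub: "N e \<subseteq> {x - R..x + R}" for e unfolding N_def by auto
  have iN: "set_integrable lborel (N e) q" and bN: "\<bar>LINT y:(N e)|lborel. q y\<bar> \<le> L * (x + R - (x - R))" for e
    using bounded_set_integral[of q "N e" "x - R" "x + R" L] Nsub R L0 qb by (auto simp: N_def)
  have IeqN: "(LINT y:(N e)|lborel. h y) = (LINT y:(N e)|lborel. q y)" if e: "0 < e" for e
  proof -
    have i1: "set_integrable lborel (N e) (\<lambda>y. 1 / (x - y))"
    proof (rule bounded_set_integral(1)[of _ _ "x - R" "x + R" "1 / e"])
      show "N e \<subseteq> {x - R..x + R}" by (rule Nsub)
      fix y assume "y \<in> N e"
      then have "e < \<bar>x - y\<bar>" by (simp add: N_def)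
      then show "\<bar>1 / (x - y)\<bar> \<le> 1 / e" using e by (simp add: abs_divide frac_le)
    qed (use R e in auto)
    have i2: "set_integrable lborel (N e) (\<lambda>y. f x * (1 / (x - y)))"
      using i1 by (rule set_integrable_mult_right)
    have "(LINT y:(N e)|lborel. h y) = (LINT y:(N e)|lborel. q y + f x * (1 / (x - y)))"
    proof (rule set_lebesgue_integral_cong)
      show "\<forall>y. y \<in> N e \<longrightarrow> h y = q y + f x * (1 / (x - y))"
      proof (intro allI impI)
        fix y assume "y \<in> N e"
        then have "x - y \<noteq> 0" using e by (auto simp: N_def)
        then show "h y = q y + f x * (1 / (x - y))" by (simp add: h_def q_def diff_divide_distrib)
      qed
    qed simp
    also have "\<dots> = (LINT y:(N e)|lborel. q y) + (LINT y:(N e)|lborel. f x * (1 / (x - y)))"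
      by (rule set_integral_add(2)[OF iN i2])
    also have "(LINT y:(N e)|lborel. f x * (1 / (x - y))) = f x * (LINT y:(N e)|lborel. 1 / (x - y))"
      by (rule set_integral_mult_right)
    also have "(LINT y:(N e)|lborel. 1 / (x - y)) = 0" unfolding N_def by (rule pv_zero)
    finally show ?thesis by simp
  qed
  define Z where "Z e = {y. 0 < \<bar>x - y\<bar> \<and> \<bar>x - y\<bar> \<le> e}" for e
  have [measurable]: "Z e \<in> sets borel" for e unfolding Z_def by measurable
  define V where "V = (LINT y:A|lborel. h y) + (LINT y:(N 0)|lborel. q y)"
  have Idiff: "\<bar>(LINT y:{y. e < \<bar>x - y\<bar>}|lborel. h y) - V\<bar> \<le> L * (2 * e)" if e: "0 < e" "e < R" for e
  proof -
    have S: "{y. e < \<bar>x - y\<bar>} = A \<union> N e" "A \<inter> N e = {}" using e by (auto simp: A_def N_def)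
    have iNe: "set_integrable lborel (N e) h"
    proof (rule bounded_set_integral(1)[of _ _ "x - R" "x + R" "B / e"])
      show "N e \<subseteq> {x - R..x + R}" by (rule Nsub)
      fix y assume y: "y \<in> N e"
      then have ey: "e < \<bar>x - y\<bar>" "\<bar>x - y\<bar> < R" by (auto simp: N_def)
      then have y1: "1 \<le> \<bar>y\<bar>" using R by linarith
      have "\<bar>f y\<bar> \<le> B * \<bar>y\<bar> powr (-gm)" using fb y1 by auto
      also have "\<dots> \<le> B * 1 powr (-gm)" using y1 gm B by (intro mult_left_mono powr_mono2') auto
      finally have fy: "\<bar>f y\<bar> \<le> B" by simp
      show "\<bar>h y\<bar> \<le> B / e" unfolding h_def abs_divide using fy ey e B by (intro frac_le) auto
    qed (use R e B in auto)
    have I1: "(LINT y:{y. e < \<bar>x - y\<bar>}|lborel. h y) = (LINT y:A|lborel. h y) + (LINT y:(N e)|lborel. q y)"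
      unfolding S(1) using set_integral_Un[OF S(2) iA iNe] IeqN[OF e(1)] by simp
    have S2: "N 0 = N e \<union> Z e" "N e \<inter> Z e = {}" using e by (auto simp: Z_def N_def)
    have iZ: "set_integrable lborel (Z e) q" and bZ: "\<bar>LINT y:(Z e)|lborel. q y\<bar> \<le> L * (x + e - (x - e))"
    proof -
      have Zsub: "Z e \<subseteq> {x - e..x + e}" unfolding Z_def by auto
      have "\<And>y. y \<in> Z e \<Longrightarrow> \<bar>q y\<bar> \<le> L" using qb e unfolding Z_def by auto
      then show "set_integrable lborel (Z e) q" "\<bar>LINT y:(Z e)|lborel. q y\<bar> \<le> L * (x + e - (x - e))"
        using bounded_set_integral[OF _ _ Zsub _ L0, of q] e by auto
    qed
    have "(LINT y:(N 0)|lborel. q y) = (LINT y:(N e)|lborel. q y) + (LINT y:(Z e)|lborel. q y)"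
      unfolding S2(1) using set_integral_Un[OF S2(2) iN iZ] .
    then show ?thesis using I1 bZ unfolding V_def by simp
  qed
  have lim: "((\<lambda>e. LINT y:{y. e < \<bar>x - y\<bar>}|lborel. h y) \<longlongrightarrow> V) (at_right 0)"
  proof -
    have "((\<lambda>e. (LINT y:{y. e < \<bar>x - y\<bar>}|lborel. h y) - V) \<longlongrightarrow> 0) (at_right 0)"
    proof (rule Lim_null_comparison)
      show "\<forall>\<^sub>F e in at_right 0. norm ((LINT y:{y. e < \<bar>x - y\<bar>}|lborel. h y) - V) \<le> L * (2 * e)"
        unfolding eventually_at_right[OF R(2)[unfolded zero_less_iff_neq_zero[symmetric]]]
        by (intro exI[of _ R]) (use Idiff R in auto)
      show "((\<lambda>e. L * (2 * e)) \<longlongrightarrow> 0) (at_right 0)"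
        by (intro tendsto_eq_intros) auto
    qed
    then show ?thesis by (simp add: Lim_null[symmetric])
  qed
  have LimV: "Lim (at_right 0) (\<lambda>e. LINT y:{y. e < \<bar>x - y\<bar>}|lborel. h y) = V"
    by (rule tendsto_Lim[OF _ lim]) simp
  have hil: "hilbert f x = V / pi"
    unfolding hilbert_def using LimV by (simp add: h_def[abs_def])
  have bN0: "\<bar>LINT y:(N 0)|lborel. q y\<bar> \<le> L * (2 * R)" using bN[of 0] by simp
  have Vb: "\<bar>V\<bar> \<le> integral\<^sup>L lborel m + L * (2 * R)"
    using bA bN0 unfolding V_def by linarith
  define X where "X = \<bar>x\<bar> powr (-gm)"
  define u where "u = (4 * R) powr (-gm)"
  have X0: "0 \<le> X" by (simp add: X_def)
  have u_le: "u \<le> X" unfolding u_def X_def R(3) using R gm by (intro powr_mono2') auto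
  have u0: "0 \<le> u" by (simp add: u_def)
  have p1: "(4 * R) powr (1 - gm) = 4 * R * u"
    unfolding u_def using R by (simp add: powr_diff powr_minus divide_inverse)
  have mv': "integral\<^sup>L lborel m = (8 * B / (1 - gm) + 4 * B / gm) * u"
  proof -
    have t1: "(B / R) * (2 * (4 * R * u / (1 - gm))) = 8 * B / (1 - gm) * u"
      using R by (simp add: divide_simps)
    have t2: "2 * ((2 * B) * (u / gm)) = 4 * B / gm * u" by simp
    show ?thesis unfolding mv p1 u_def[symmetric] t1 t2 by (simp add: distrib_right)
  qed
  have Rg: "R powr (-gm) \<le> 2 * X"
  proof -
    have "R powr (-gm) = (\<bar>x\<bar> / 2) powr (-gm)" by (simp add: R_def)
    also have "\<dots> = \<bar>x\<bar> powr (-gm) / 2 powr (-gm)" by (rule powr_divide)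
    also have "2 powr (-gm) = inverse (2 powr gm)" by (rule powr_minus)
    also have "\<bar>x\<bar> powr (-gm) / inverse (2 powr gm) = 2 powr gm * X" by (simp add: X_def divide_inverse mult.commute)
    also have "\<dots> \<le> 2 * X" using powr_mono[of gm 1 2] gm X0 by (intro mult_right_mono) auto
    finally show ?thesis .
  qed
  have LR: "L * (2 * R) = 2 * B' * R powr (-gm)"
  proof -
    have e: "-1-gm = -gm - 1" by simp
    have "R powr (-1-gm) = R powr (-gm) / R powr 1" unfolding e by (rule powr_diff)
    then have "R powr (-1-gm) = R powr (-gm) / R" using R by simp
    then show ?thesis unfolding L_def using R by simp
  qed
  have "\<bar>V\<bar> \<le> (8 * B / (1 - gm) + 4 * B / gm) * X + 4 * B' * X"
  proof -
    have "(8 * B / (1 - gm) + 4 * B / gm) * u \<le> (8 * B / (1 - gm) + 4 * B / gm) * X"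
      using u_le B gm by (intro mult_left_mono) auto
    moreover have "2 * B' * R powr (-gm) \<le> 4 * B' * X" using mult_left_mono[OF Rg, of "2 * B'"] B by simp
    ultimately show ?thesis using Vb mv' LR by linarith
  qed
  then have Vb2: "\<bar>V\<bar> \<le> (8 * B / (1 - gm) + 4 * B / gm + 4 * B') * X" by (simp add: algebra_simps)
  have "\<bar>hilbert f x\<bar> = \<bar>V\<bar> / pi" unfolding hil by simp
  also have "\<dots> \<le> \<bar>V\<bar>"
  proof -
    have "\<bar>V\<bar> * 1 \<le> \<bar>V\<bar> * pi" using pi_gt3 by (intro mult_left_mono) auto
    then show ?thesis using pi_gt_zero by (simp add: divide_le_eq)
  qed
  finally show ?thesis using Vb2 unfolding X_def by simp
qed





definition "C0c mu nu = 4 * 5 powr (mu - nu) * (mu - nu) * pi * mu / nu"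
definition "gmc (mu::real) = min (mu - 1/2) (1/2)"
definition "Bc mu nu M = C0c mu nu * (1 + 1 / (2 * mu - 1)) * exp (4 * M) + (mu - nu) + 2 * (mu - nu) * pi"
definition "B'c mu nu M = C0c mu nu * exp (4 * M) + (mu - nu)"
definition "HCc mu nu M = 8 * Bc mu nu M / (1 - gmc mu) + 4 * Bc mu nu M / gmc mu + 4 * B'c mu nu M"

locale L =
  fixes mu nu :: real and g hinv :: "real \<Rightarrow> real" and kappa :: real and F :: "real \<Rightarrow> real"
  assumes mu: "mu > 1/2" and nu0: "0 < nu" and nu1: "nu < 1/2"
    and gX: "g \<in> Xspace" and adm: "admissible mu nu g hinv kappa F"
begin

definition "a = mu - nu"
definition "E = exp (supnorm g)"
definition "D x = kappa / (x * hinv x * hdens mu nu g x)"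
definition "base x = \<bar>x\<bar> powr (nu - 1) * (x\<^sup>2 + 1) powr (a/2)"
definition "P x = \<bar>x\<bar> powr nu * (x\<^sup>2 + 1) powr (a/2)"

lemma a_pos: "a > 0" using mu nu1 by (simp add: a_def)
lemma E_pos: "E > 0" by (simp add: E_def)

lemma hinv_cont: "continuous_on UNIV hinv" and hinv0: "hinv 0 = 0"
  and hinv_deriv: "x \<noteq> 0 \<Longrightarrow> (hinv has_real_derivative hdens mu nu g x) (at x)"
  and kappa_pos: "kappa > 0"
  and D_int: "integrable lborel D" and D_integral: "integral\<^sup>L lborel D = a * pi"
  and F_cont: "continuous_on UNIV F"
  and F_deriv: "x \<noteq> 0 \<Longrightarrow> (F has_real_derivative D x) (at x)"
  and F_top: "(F \<longlongrightarrow> 0) at_top"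
  using adm unfolding admissible_def D_def[abs_def] a_def by auto

lemma g_bound: "exp (g x) \<le> E" "1/E \<le> exp (g x)"
proof -
  have h: "\<bar>g x\<bar> \<le> supnorm g" by (rule supnorm_ge[OF gX])
  show "exp (g x) \<le> E" using h by (simp add: E_def)
  have "exp (- supnorm g) \<le> exp (g x)" using h by simp
  then show "1/E \<le> exp (g x)" by (simp add: E_def exp_minus inverse_eq_divide)
qed

lemma sq1_pos[simp]: "0 < (x::real)\<^sup>2 + 1" by (smt (verit) zero_le_power2)
lemma sq1_ne[simp]: "(x::real)\<^sup>2 + 1 \<noteq> 0" by (smt (verit) zero_le_power2)

lemma hdens_eq: "hdens mu nu g x = base x * exp (g x)"
  by (simp add: hdens_def base_def a_def)

lemma base_pos: "x \<noteq> 0 \<Longrightarrow> base x > 0" by (simp add: base_def)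

lemma hdens_bounds: "x \<noteq> 0 \<Longrightarrow> base x / E \<le> hdens mu nu g x \<and> hdens mu nu g x \<le> E * base x"
  using g_bound[of x] base_pos[of x] E_pos
  by (auto simp: hdens_eq field_simps intro: mult_left_mono)

lemma P_deriv:
  assumes "s > 0"
  shows "(P has_real_derivative base s * (nu + a * s\<^sup>2/(s\<^sup>2+1))) (at s)"
proof -
  have eq: "\<forall>\<^sub>F t in nhds s. P t = t powr nu * (t\<^sup>2 + 1) powr (a/2)"
    using eventually_nhds_in_open[of "{0<..}" s] assms
    by (auto elim!: eventually_mono simp: P_def)
  have "((\<lambda>t. t powr nu * (t\<^sup>2 + 1) powr (a/2)) has_real_derivative
     nu * s powr (nu - 1) * (s\<^sup>2 + 1) powr (a/2) + s powr nu * ((a/2) * (s\<^sup>2+1) powr (a/2 - 1) * (2 * s))) (at s)"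
    using assms by (auto intro!: derivative_eq_intros simp del: sq1_pos) (simp add: sq1_pos)
  moreover have "nu * s powr (nu - 1) * (s\<^sup>2 + 1) powr (a/2) + s powr nu * ((a/2) * (s\<^sup>2+1) powr (a/2 - 1) * (2 * s))
     = base s * (nu + a * s\<^sup>2/(s\<^sup>2+1))"
  proof -
    have 1: "s powr nu = s powr (nu - 1) * s" using assms by (simp add: powr_diff)
    have 2: "(s\<^sup>2+1) powr (a/2 - 1) = (s\<^sup>2+1) powr (a/2) / (s\<^sup>2+1)"
      by (simp add: powr_diff)
    have 3: "1 + s * s \<noteq> 0" "2 + s * (s * 2) \<noteq> 0" using assms by (smt (verit) mult_pos_pos)+
    show ?thesis unfolding 1 2 base_def using assms 3
      by (simp add: field_simps power2_eq_square)
  qed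
  ultimately show ?thesis
    using DERIV_cong_ev[OF refl eq refl] by simp
qed

lemma P_cont: "continuous_on UNIV P"
  unfolding P_def[abs_def] using nu0 a_pos
  by (intro continuous_intros continuous_on_powr') auto

lemma P0: "P 0 = 0" by (simp add: P_def)
lemma P_minus: "P (-x) = P x" by (simp add: P_def)
lemma P_pos: "x \<noteq> 0 \<Longrightarrow> P x > 0" by (simp add: P_def)

lemma P_deriv_neg:
  assumes "s < 0"
  shows "(P has_real_derivative - (base s * (nu + a * s\<^sup>2/(s\<^sup>2+1)))) (at s)"
proof -
  have "((\<lambda>t. P (-t)) has_real_derivative (base (-s) * (nu + a * (-s)\<^sup>2/((-s)\<^sup>2+1))) * (-1)) (at s)"
    using assms by (intro DERIV_chain2[OF P_deriv]) (auto intro!: derivative_eq_intros)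
  then show ?thesis by (simp add: P_minus base_def)
qed

lemma factor_bounds: "nu \<le> nu + a * s\<^sup>2/(s\<^sup>2+1) \<and> nu + a * s\<^sup>2/(s\<^sup>2+1) \<le> mu"
proof -
  have "s\<^sup>2/(s\<^sup>2+1) \<le> 1" "0 \<le> s\<^sup>2/(s\<^sup>2+1)" by auto
  then show ?thesis using a_pos mult_left_mono[of "s\<^sup>2/(s\<^sup>2+1)" 1 a] by (auto simp: a_def)
qed

lemma hinv_lower_pos:
  assumes "s > 0" shows "P s / (mu * E) \<le> hinv s"
proof -
  have "P s / (mu * E) - P 0 / (mu * E) \<le> hinv s - hinv 0"
  proof (rule cmp_deriv[where u'="\<lambda>t. base t * (nu + a * t\<^sup>2/(t\<^sup>2+1)) / (mu * E)" and v'="\<lambda>t. hdens mu nu g t"])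
    show "continuous_on {0..s} (\<lambda>t. P t / (mu * E))"
      using mu nu0 E_pos by (intro continuous_intros continuous_on_subset[OF P_cont]) auto
    show "continuous_on {0..s} hinv" by (rule continuous_on_subset[OF hinv_cont]) auto
    fix x assume x: "0 < x" "x < s"
    show "((\<lambda>t. P t / (mu * E)) has_real_derivative base x * (nu + a * x\<^sup>2/(x\<^sup>2+1)) / (mu * E)) (at x)"
      using x mu nu0 E_pos by (auto intro!: derivative_eq_intros P_deriv)
    show "(hinv has_real_derivative hdens mu nu g x) (at x)" using x by (intro hinv_deriv) auto
    have "base x * (nu + a * x\<^sup>2/(x\<^sup>2+1)) / (mu * E) \<le> base x * mu / (mu * E)"
      using factor_bounds[of x] base_pos[of x] x mu E_pos
      by (intro divide_right_mono mult_left_mono) auto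
    also have "\<dots> = base x / E" using mu by simp
    also have "\<dots> \<le> hdens mu nu g x" using hdens_bounds[of x] x by auto
    finally show "base x * (nu + a * x\<^sup>2/(x\<^sup>2+1)) / (mu * E) \<le> hdens mu nu g x" .
  qed (use assms in auto)
  then show ?thesis by (simp add: P0 hinv0)
qed

lemma hinv_upper_pos:
  assumes "s > 0" shows "hinv s \<le> E * P s / nu"
proof -
  have "hinv s - hinv 0 \<le> E * P s / nu - E * P 0 / nu"
  proof (rule cmp_deriv[where v'="\<lambda>t. E * (base t * (nu + a * t\<^sup>2/(t\<^sup>2+1))) / nu" and u'="\<lambda>t. hdens mu nu g t"])
    show "continuous_on {0..s} (\<lambda>t. E * P t / nu)"
      using mu nu0 E_pos by (intro continuous_intros continuous_on_subset[OF P_cont]) auto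
    show "continuous_on {0..s} hinv" by (rule continuous_on_subset[OF hinv_cont]) auto
    fix x assume x: "0 < x" "x < s"
    show "((\<lambda>t. E * P t / nu) has_real_derivative E * (base x * (nu + a * x\<^sup>2/(x\<^sup>2+1))) / nu) (at x)"
      using x mu nu0 E_pos by (auto intro!: derivative_eq_intros P_deriv)
    show "(hinv has_real_derivative hdens mu nu g x) (at x)" using x by (intro hinv_deriv) auto
    have "hdens mu nu g x \<le> E * base x" using hdens_bounds[of x] x by auto
    also have "\<dots> = E * (base x * nu) / nu" using nu0 by simp
    also have "\<dots> \<le> E * (base x * (nu + a * x\<^sup>2/(x\<^sup>2+1))) / nu"
      using factor_bounds[of x] base_pos[of x] x nu0 E_pos
      by (intro divide_right_mono mult_left_mono) auto
    finally show "hdens mu nu g x \<le> E * (base x * (nu + a * x\<^sup>2/(x\<^sup>2+1))) / nu" .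
  qed (use assms in auto)
  then show ?thesis by (simp add: P0 hinv0)
qed

lemma hinv_upper_neg:
  assumes "s < 0" shows "hinv s \<le> - P s / (mu * E)"
proof -
  have "(- P 0 / (mu * E)) - (- P s / (mu * E)) \<le> hinv 0 - hinv s"
  proof (rule cmp_deriv[where u'="\<lambda>t. base t * (nu + a * t\<^sup>2/(t\<^sup>2+1)) / (mu * E)" and v'="\<lambda>t. hdens mu nu g t"
        and u = "\<lambda>t. - P t / (mu * E)"])
    show "continuous_on {s..0} (\<lambda>t. - P t / (mu * E))"
      using mu nu0 E_pos by (intro continuous_intros continuous_on_subset[OF P_cont]) auto
    show "continuous_on {s..0} hinv" by (rule continuous_on_subset[OF hinv_cont]) auto
    fix x assume x: "s < x" "x < 0"
    show "((\<lambda>t. - P t / (mu * E)) has_real_derivative base x * (nu + a * x\<^sup>2/(x\<^sup>2+1)) / (mu * E)) (at x)"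
      using x mu nu0 E_pos by (auto intro!: derivative_eq_intros P_deriv_neg)
    show "(hinv has_real_derivative hdens mu nu g x) (at x)" using x by (intro hinv_deriv) auto
    have "base x * (nu + a * x\<^sup>2/(x\<^sup>2+1)) / (mu * E) \<le> base x * mu / (mu * E)"
      using factor_bounds[of x] base_pos[of x] x mu E_pos
      by (intro divide_right_mono mult_left_mono) auto
    also have "\<dots> = base x / E" using mu by simp
    also have "\<dots> \<le> hdens mu nu g x" using hdens_bounds[of x] x by auto
    finally show "base x * (nu + a * x\<^sup>2/(x\<^sup>2+1)) / (mu * E) \<le> hdens mu nu g x" .
  qed (use assms in auto)
  then show ?thesis by (simp add: P0 hinv0)
qed

lemma shinv_lower: assumes "s \<noteq> 0" shows "\<bar>s\<bar> * P s / (mu * E) \<le> s * hinv s"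
proof (cases "s > 0")
  case True
  then show ?thesis using hinv_lower_pos[OF True] mult_left_mono[of "P s / (mu * E)" "hinv s" s]
    by (simp add: algebra_simps)
next
  case False
  then have s: "s < 0" using assms by simp
  have "s * hinv s \<ge> s * (- P s / (mu * E))"
    using hinv_upper_neg[OF s] s by (intro mult_left_mono_neg) auto
  then show ?thesis using s by (simp add: algebra_simps)
qed

lemma PE_pos: "x \<noteq> 0 \<Longrightarrow> 0 < \<bar>x\<bar> * P x / (mu * E)"
  using P_pos[of x] mu E_pos by (simp add: divide_pos_pos)

lemma shinv_pos: "s \<noteq> 0 \<Longrightarrow> 0 < s * hinv s"
  using shinv_lower[of s] PE_pos[of s] by linarith

lemma hdens_pos: "s \<noteq> 0 \<Longrightarrow> 0 < hdens mu nu g s"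
proof -
  assume s: "s \<noteq> 0"
  have "0 < base s / E" using base_pos[OF s] E_pos by simp
  then show ?thesis using hdens_bounds[OF s] by linarith
qed

lemma D_pos: "s \<noteq> 0 \<Longrightarrow> 0 < D s"
  using shinv_pos[of s] hdens_pos[of s] kappa_pos by (simp add: D_def)

lemma D_nonneg: "0 \<le> D s"
  using D_pos[of s] by (cases "s = 0") (auto simp: D_def)

definition "Q = 4 * E\<^sup>2 * 5 powr a / nu"

lemma Q_pos: "Q > 0" using E_pos nu0 by (simp add: Q_def)

lemma D_lower_12: assumes "1 \<le> s" "s \<le> 2" shows "kappa / Q \<le> D s"
proof -
  have s0: "s > 0" "s \<noteq> 0" using assms by auto
  have 1: "s powr nu \<le> 2"
    using powr_mono[of nu 1 s] assms nu1 by auto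
  have 2: "s powr (nu - 1) \<le> 1"
    using powr_mono[of "nu - 1" 0 s] assms nu1 by auto
  have 3: "(s\<^sup>2+1) powr (a/2) \<le> 5 powr (a/2)"
  proof (rule powr_mono2)
    have "s\<^sup>2 \<le> 2\<^sup>2" using assms by (intro power_mono) auto
    then show "s\<^sup>2 + 1 \<le> 5" by simp
  qed (use a_pos in auto)
  have Ple: "P s \<le> 2 * 5 powr (a/2)"
    unfolding P_def using 1 3 s0 by (simp add: mult_mono)
  have ble: "base s \<le> 5 powr (a/2)"
    unfolding base_def using 2 3 s0 mult_mono[OF 2 3] by simp
  have "s * hinv s * hdens mu nu g s \<le> 2 * (E * P s / nu) * (E * base s)"
  proof -
    have h1: "hinv s \<le> E * P s / nu" by (rule hinv_upper_pos[OF s0(1)])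
    have h2: "hdens mu nu g s \<le> E * base s" using hdens_bounds[OF s0(2)] by simp
    have "0 < P s / (mu * E)" using P_pos[OF s0(2)] mu E_pos by simp
    then have h3: "0 \<le> hinv s" using hinv_lower_pos[OF s0(1)] by linarith
    have h4: "0 \<le> hdens mu nu g s" using hdens_pos[OF s0(2)] by simp
    have h5: "0 \<le> 2 * (E * P s / nu)" using P_pos[OF s0(2)] nu0 E_pos by simp
    show ?thesis
      by (rule mult_mono[OF mult_mono[OF assms(2) h1 _ h3] h2 h5 h4]) simp
  qed
  also have "\<dots> \<le> 2 * (E * (2 * 5 powr (a/2)) / nu) * (E * 5 powr (a/2))"
    using Ple ble E_pos nu0 P_pos[of s] base_pos[of s] s0
    by (intro mult_mono divide_right_mono mult_left_mono) auto
  also have "\<dots> = 4 * E\<^sup>2 * (5 powr (a/2) * 5 powr (a/2)) / nu"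
    by (simp add: power2_eq_square algebra_simps)
  also have "5 powr (a/2) * 5 powr (a/2) = 5 powr a" by (simp add: powr_add[symmetric])
  also have "4 * E\<^sup>2 * 5 powr a / nu = Q" by (simp add: Q_def)
  finally have le: "s * hinv s * hdens mu nu g s \<le> Q" .
  have pos: "0 < s * hinv s * hdens mu nu g s"
    using shinv_pos[OF s0(2)] hdens_pos[OF s0(2)] by simp
  show ?thesis unfolding D_def using le pos kappa_pos Q_pos
    by (intro divide_left_mono) auto
qed

lemma kappa_bound: "kappa \<le> Q * a * pi"
proof -
  have "integral\<^sup>L lborel (\<lambda>x. kappa / Q * indicator {1..2::real} x) \<le> integral\<^sup>L lborel D"
  proof (rule integral_mono[OF _ D_int])
    show "integrable lborel (\<lambda>x. kappa / Q * indicator {1..2::real} x :: real)"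
      by (intro integrable_mult_right integrable_real_indicator) auto
    fix x show "kappa / Q * indicator {1..2::real} x \<le> D x"
      using D_lower_12[of x] D_nonneg[of x] by (auto split: split_indicator)
  qed
  also have "\<dots> = a * pi" by (rule D_integral)
  finally have "kappa / Q \<le> a * pi" by simp
  then show ?thesis using Q_pos by (simp add: field_simps)
qed

definition "w s = 1 / (\<bar>s\<bar> powr (2 * nu) * (s\<^sup>2 + 1) powr a)"
definition "C0 = 4 * 5 powr a * a * pi * mu / nu"

lemma C0_pos: "C0 > 0" using a_pos mu nu0 by (simp add: C0_def)

lemma w_pos: "s \<noteq> 0 \<Longrightarrow> w s > 0" by (simp add: w_def)

lemma D_upper: assumes s: "s \<noteq> 0" shows "D s \<le> C0 * E ^ 4 * w s"
proof -
  have prod: "\<bar>s\<bar> * P s * base s = \<bar>s\<bar> powr (2 * nu) * (s\<^sup>2 + 1) powr a"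
  proof -
    have "\<bar>s\<bar> * P s * base s = (\<bar>s\<bar> powr 1 * \<bar>s\<bar> powr nu * \<bar>s\<bar> powr (nu - 1)) * ((s\<^sup>2 + 1) powr (a/2) * (s\<^sup>2 + 1) powr (a/2))"
      using s by (simp add: P_def base_def algebra_simps)
    also have "\<dots> = \<bar>s\<bar> powr (1 + nu + (nu - 1)) * (s\<^sup>2 + 1) powr (a/2 + a/2)"
      by (simp only: powr_add)
    finally have e: "\<bar>s\<bar> * P s * base s = \<bar>s\<bar> powr (1 + nu + (nu - 1)) * (s\<^sup>2 + 1) powr (a/2 + a/2)" .
    have "1 + nu + (nu - 1) = 2 * nu" "a/2 + a/2 = a" by simp_all
    with e show ?thesis by simp
  qed
  define d where "d = \<bar>s\<bar> powr (2 * nu) * (s\<^sup>2 + 1) powr a"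
  have dpos: "d > 0" using s by (simp add: d_def)
  have "d / (mu * E\<^sup>2) = (\<bar>s\<bar> * P s / (mu * E)) * (base s / E)"
    using prod E_pos mu by (simp add: d_def field_simps power2_eq_square)
  also have "\<dots> \<le> s * hinv s * hdens mu nu g s"
    using shinv_lower[OF s] hdens_bounds[OF s] PE_pos[OF s] base_pos[OF s] E_pos
    by (intro mult_mono) auto
  finally have le: "d / (mu * E\<^sup>2) \<le> s * hinv s * hdens mu nu g s" .
  have "D s \<le> kappa / (d / (mu * E\<^sup>2))"
  proof -
    have p: "0 < d / (mu * E\<^sup>2)" using dpos mu E_pos by simp
    have q: "0 < s * hinv s * hdens mu nu g s" using shinv_pos[OF s] hdens_pos[OF s] by simp
    show ?thesis unfolding D_def
      by (rule divide_left_mono[OF le]) (use mult_pos_pos[OF q p] kappa_pos in simp_all)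
  qed
  also have "\<dots> = kappa * mu * E\<^sup>2 / d" using mu E_pos dpos by (simp add: field_simps)
  also have "\<dots> \<le> (Q * a * pi) * mu * E\<^sup>2 / d"
    using kappa_bound mu E_pos dpos by (intro divide_right_mono mult_right_mono) auto
  also have "\<dots> = C0 * E ^ 4 * w s"
    unfolding Q_def C0_def w_def d_def by (simp add: field_simps power2_eq_square eval_nat_numeral)
  finally show ?thesis .
qed

lemma F_mono_aux: assumes "s \<le> t" "\<not> (s < 0 \<and> 0 < t)" shows "F s \<le> F t"
proof (rule DERIV_nonneg_imp_increasing_open[OF assms(1)])
  fix x assume "s < x" "x < t"
  then have "x \<noteq> 0" using assms(2) by auto
  then show "\<exists>y. (F has_real_derivative y) (at x) \<and> 0 \<le> y"
    using F_deriv D_nonneg by blast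
qed (rule continuous_on_subset[OF F_cont], auto)

lemma F_mono: assumes "s \<le> t" shows "F s \<le> F t"
proof (cases "s < 0 \<and> 0 < t")
  case True
  then have "F s \<le> F 0" "F 0 \<le> F t" by (auto intro: F_mono_aux)
  then show ?thesis by simp
next
  case False then show ?thesis using F_mono_aux[OF assms] by blast
qed

lemma F_le0: "F s \<le> 0"
proof (rule tendsto_lowerbound[OF F_top])
  show "\<forall>\<^sub>F z in at_top. F s \<le> F z"
    using eventually_ge_at_top[of s] by eventually_elim (rule F_mono)
qed simp

lemma D_has_integral_ivl: assumes "s \<le> t" shows "(D has_integral (F t - F s)) {s..t}"
proof (rule fundamental_theorem_of_calculus_interior_strong[of "{0}"])
  fix x assume "x \<in> {s<..<t} - {0}"
  then show "(F has_vector_derivative D x) (at x)"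
    using F_deriv[of x] by (simp add: has_real_derivative_iff_has_vector_derivative)
qed (use assms continuous_on_subset[OF F_cont] in auto)

lemma D_has_integral_UNIV: "(D has_integral (a * pi)) UNIV"
  using has_integral_integral_lborel[OF D_int] D_integral by simp

lemma F_diff_le: assumes "s \<le> t" shows "F t - F s \<le> a * pi"
proof -
  have "integral {s..t} D \<le> integral UNIV D"
    using D_has_integral_ivl[OF assms] D_has_integral_UNIV D_nonneg
    by (intro integral_subset_le) (auto simp: integrable_on_def)
  then show ?thesis
    using D_has_integral_ivl[OF assms] D_has_integral_UNIV
    by (simp add: integral_unique)
qed

lemma F_ge: "- (a * pi) \<le> F s"
proof (rule tendsto_upperbound)
  show "((\<lambda>z. F z - a * pi) \<longlongrightarrow> - (a * pi)) at_top"
    using tendsto_diff[OF F_top tendsto_const[of "a*pi"]] by simp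
  show "\<forall>\<^sub>F z in at_top. F z - a * pi \<le> F s"
    using eventually_ge_at_top[of s] by eventually_elim (use F_diff_le in force)
qed simp

lemma w_le: assumes "t \<noteq> 0" shows "w t \<le> \<bar>t\<bar> powr (-2 * mu)"
proof -
  have "(t\<^sup>2) powr a = (\<bar>t\<bar> powr 2) powr a" by (simp add: powr_numeral)
  also have "\<dots> = \<bar>t\<bar> powr (2 * a)" by (simp only: powr_powr)
  finally have 0: "(t\<^sup>2) powr a = \<bar>t\<bar> powr (2 * a)" .
  have "\<bar>t\<bar> powr (2 * a) = (t\<^sup>2) powr a" by (rule 0[symmetric])
  also have "\<dots> \<le> (t\<^sup>2 + 1) powr a" using a_pos by (intro powr_mono2) auto
  finally have 1: "\<bar>t\<bar> powr (2 * a) \<le> (t\<^sup>2 + 1) powr a" .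
  have "\<bar>t\<bar> powr (2 * nu) * \<bar>t\<bar> powr (2 * a) \<le> \<bar>t\<bar> powr (2 * nu) * (t\<^sup>2 + 1) powr a"
    using 1 by (intro mult_left_mono) auto
  moreover have "\<bar>t\<bar> powr (2 * nu) * \<bar>t\<bar> powr (2 * a) = \<bar>t\<bar> powr (2 * mu)"
    by (simp add: powr_add[symmetric] a_def algebra_simps)
  ultimately have "\<bar>t\<bar> powr (2 * mu) \<le> \<bar>t\<bar> powr (2 * nu) * (t\<^sup>2 + 1) powr a" by simp
  then have "1 / (\<bar>t\<bar> powr (2 * nu) * (t\<^sup>2 + 1) powr a) \<le> 1 / \<bar>t\<bar> powr (2 * mu)"
    using assms by (intro divide_left_mono) auto
  then show ?thesis by (simp add: w_def powr_minus divide_inverse)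
qed

definition "K = C0 * E ^ 4"
lemma K_pos: "K > 0" using C0_pos E_pos by (simp add: K_def)

lemma D_le_pow: "t \<noteq> 0 \<Longrightarrow> D t \<le> K * \<bar>t\<bar> powr (-2 * mu)"
  using D_upper[of t] w_le[of t] K_pos unfolding K_def
  by (smt (verit) mult_left_mono C0_pos E_pos zero_less_power)

lemma F_tail_pos: assumes y: "1 \<le> y" shows "- F y \<le> K * y powr (1 - 2 * mu) / (2 * mu - 1)"
proof -
  define G where "G t = - K * t powr (1 - 2 * mu) / (2 * mu - 1)" for t
  have b: "2 * mu - 1 > 0" using mu by simp
  have step: "F z - F y \<le> G z - G y" if z: "y \<le> z" for z
  proof (rule cmp_deriv[OF z, where u'=D and v'="\<lambda>t. K * t powr (-2 * mu)"])
    show "continuous_on {y..z} F" by (rule continuous_on_subset[OF F_cont]) auto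
    show "continuous_on {y..z} G" unfolding G_def using y b
      by (intro continuous_intros) auto
    fix t assume t: "y < t" "t < z"
    show "(F has_real_derivative D t) (at t)" using t y by (intro F_deriv) auto
    have "(G has_real_derivative - K * ((1 - 2 * mu) * t powr (1 - 2 * mu - 1)) / (2 * mu - 1)) (at t)"
      unfolding G_def[abs_def] using t y b by (auto intro!: derivative_eq_intros)
    moreover have "- K * ((1 - 2 * mu) * t powr (1 - 2 * mu - 1)) / (2 * mu - 1) = K * t powr (-2 * mu)"
      using b by (simp add: field_simps)
    ultimately show "(G has_real_derivative K * t powr (-2 * mu)) (at t)" by simp
    show "D t \<le> K * t powr (-2 * mu)" using D_le_pow[of t] t y by simp
  qed
  have "- F y \<le> - G y"
  proof (rule tendsto_upperbound)
    show "((\<lambda>z. F z - F y) \<longlongrightarrow> - F y) at_top"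
      using tendsto_diff[OF F_top tendsto_const[of "F y"]] by simp
    show "\<forall>\<^sub>F z in at_top. F z - F y \<le> - G y"
      using eventually_ge_at_top[of y]
    proof eventually_elim
      case (elim z)
      have "G z \<le> 0" unfolding G_def using b K_pos by (simp add: divide_nonpos_pos)
      then show ?case using step[OF elim] by simp
    qed
  qed simp
  then show ?thesis by (simp add: G_def)
qed

lemma F_tail_neg: assumes y: "y \<le> -1" shows "F y + a * pi \<le> K * \<bar>y\<bar> powr (1 - 2 * mu) / (2 * mu - 1)"
proof -
  define G where "G t = K * (- t) powr (1 - 2 * mu) / (2 * mu - 1)" for t
  have b: "2 * mu - 1 > 0" using mu by simp
  have step: "F y - F s \<le> G y - G s" if s: "s \<le> y" for s
  proof (rule cmp_deriv[OF s, where u'=D and v'="\<lambda>t. K * (-t) powr (-2 * mu)"])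
    show "continuous_on {s..y} F" by (rule continuous_on_subset[OF F_cont]) auto
    show "continuous_on {s..y} G" unfolding G_def using y b
      by (intro continuous_intros) auto
    fix t assume t: "s < t" "t < y"
    show "(F has_real_derivative D t) (at t)" using t y by (intro F_deriv) auto
    have "(G has_real_derivative K * ((1 - 2 * mu) * (- t) powr (1 - 2 * mu - 1) * (-1)) / (2 * mu - 1)) (at t)"
      unfolding G_def[abs_def] using t y b by (auto intro!: derivative_eq_intros)
    moreover have "K * ((1 - 2 * mu) * (- t) powr (1 - 2 * mu - 1) * (-1)) / (2 * mu - 1) = K * (-t) powr (-2 * mu)"
      using b by (simp add: field_simps)
    ultimately show "(G has_real_derivative K * (-t) powr (-2 * mu)) (at t)" by simp
    show "D t \<le> K * (-t) powr (-2 * mu)" using D_le_pow[of t] t y by simp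
  qed
  have Gy: "G y = K * \<bar>y\<bar> powr (1 - 2 * mu) / (2 * mu - 1)" using y by (simp add: G_def)
  have Gnn: "0 \<le> G s" for s unfolding G_def using b K_pos by simp
  have "F y + a * pi \<le> G y + e" if e: "e > 0" for e
  proof -
    have "\<forall>e>0. \<exists>B>0. \<forall>c d. ball 0 B \<subseteq> cbox c d \<longrightarrow>
            norm (integral (cbox c d) (\<lambda>x. if x \<in> UNIV then D x else 0) - a * pi) < e"
      using D_has_integral_UNIV unfolding has_integral_alt' by blast
    then obtain B where B: "B > 0" "\<And>c d. ball 0 B \<subseteq> cbox c d \<Longrightarrow>
            norm (integral (cbox c d) D - a * pi) < e"
      using e by force
    define n where "n = max B \<bar>y\<bar>"
    have "ball 0 B \<subseteq> cbox (-n) n" unfolding n_def by (auto simp: dist_real_def)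
    then have close: "\<bar>integral {-n..n} D - a * pi\<bar> < e" using B(2) by force
    have nn: "-n \<le> y" "y \<le> n" "-n \<le> n" using y unfolding n_def by auto
    have I: "integral {-n..n} D = F n - F (-n)"
      using D_has_integral_ivl[OF nn(3)] by (simp add: integral_unique)
    have "F y + a * pi = (F y - F (-n)) + (a * pi - (F n - F (-n))) + F n" by simp
    also have "\<dots> \<le> (G y - G (-n)) + e + 0"
      using step[OF nn(1)] close I F_le0[of n] by linarith
    also have "\<dots> \<le> G y + e" using Gnn[of "-n"] by simp
    finally show ?thesis .
  qed
  then have "F y + a * pi \<le> G y" by (meson field_le_epsilon)
  then show ?thesis using Gy by simp
qed

definition "fF y = F y - a * theta y"

lemma E4: "E ^ 4 = exp (4 * supnorm g)"
  unfolding E_def by (simp add: exp_of_nat_mult[symmetric])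

lemma f_bound_all: "\<bar>fF y\<bar> \<le> 2 * a * pi"
proof -
  have "- (a * pi) \<le> F y" "F y \<le> 0" by (rule F_ge, rule F_le0)
  moreover have "- pi \<le> theta y" "theta y \<le> 0" using theta_range[of y] by auto
  moreover have "a * (- pi) \<le> a * theta y" "a * theta y \<le> 0"
    using calculation(3,4) a_pos by (intro mult_left_mono, simp_all add: mult_nonneg_nonpos)
  ultimately show ?thesis using a_pos pi_gt_zero unfolding fF_def by (auto simp: abs_if)
qed

lemma f_bound_large: assumes y: "1 \<le> \<bar>y\<bar>"
  shows "\<bar>fF y\<bar> \<le> K / (2 * mu - 1) * \<bar>y\<bar> powr (1 - 2 * mu) + a * \<bar>y\<bar> powr (-1)"
proof -
  have eqK: "K * \<bar>y\<bar> powr (1 - 2 * mu) / (2 * mu - 1) = K / (2 * mu - 1) * \<bar>y\<bar> powr (1 - 2 * mu)"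
    by simp
  show ?thesis
  proof (cases "y \<ge> 1")
    case True
    have F1: "- F y \<le> K * \<bar>y\<bar> powr (1 - 2 * mu) / (2 * mu - 1)" using F_tail_pos[OF True] True by simp
    have F2: "F y \<le> 0" by (rule F_le0)
    have T: "\<bar>a * theta y\<bar> \<le> a * \<bar>y\<bar> powr (-1)"
      using theta_large_pos[OF True] a_pos True
      by (simp add: abs_mult powr_minus divide_inverse mult_left_mono)
    have "\<bar>fF y\<bar> \<le> \<bar>F y\<bar> + \<bar>a * theta y\<bar>" unfolding fF_def by (rule abs_triangle_ineq4)
    then show ?thesis using F1 F2 T eqK by linarith
  next
    case False
    then have yn: "y \<le> -1" using y by linarith
    have F1: "F y + a * pi \<le> K * \<bar>y\<bar> powr (1 - 2 * mu) / (2 * mu - 1)" by (rule F_tail_neg[OF yn])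
    have F2: "0 \<le> F y + a * pi" using F_ge[of y] by simp
    have T0: "0 \<le> theta y + pi" "theta y + pi \<le> 1 / \<bar>y\<bar>" using theta_large_neg[OF yn] by auto
    have T: "\<bar>a * (theta y + pi)\<bar> \<le> a * \<bar>y\<bar> powr (-1)"
    proof -
      have "a * (theta y + pi) \<le> a * (1 / \<bar>y\<bar>)" using T0 a_pos by (intro mult_left_mono) auto
      then show ?thesis using T0 a_pos yn by (simp add: abs_mult powr_minus divide_inverse)
    qed
    have e: "fF y = (F y + a * pi) - a * (theta y + pi)" unfolding fF_def by (simp add: algebra_simps)
    have "\<bar>fF y\<bar> \<le> \<bar>F y + a * pi\<bar> + \<bar>a * (theta y + pi)\<bar>" unfolding e by (rule abs_triangle_ineq4)
    then show ?thesis using F1 F2 T eqK by linarith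
  qed
qed

lemma f_deriv: assumes "y \<noteq> 0" shows "(fF has_real_derivative D y - a * (1 / (y\<^sup>2 + 1))) (at y)"
  unfolding fF_def[abs_def] using assms by (auto intro!: derivative_eq_intros F_deriv theta_deriv)

lemma f_deriv_bound: assumes "y \<noteq> 0"
  shows "\<bar>D y - a * (1 / (y\<^sup>2 + 1))\<bar> \<le> C0 * E ^ 4 * w y + a * (1 / (y\<^sup>2 + 1))"
proof -
  have "0 \<le> D y" "D y \<le> C0 * E ^ 4 * w y" using D_nonneg D_upper[OF assms] by auto
  moreover have "0 \<le> a * (1 / (y\<^sup>2 + 1))" using a_pos by simp
  ultimately show ?thesis by linarith
qed


lemma C0_eq: "C0 = C0c mu nu" by (simp add: C0_def C0c_def a_def)

lemma part1:
  "(\<forall>x. \<bar>x\<bar> \<ge> 1 \<longrightarrow>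
      \<bar>fF x\<bar> \<le> C0c mu nu * (1 + 1 / (2 * mu - 1)) * exp (4 * supnorm g) * \<bar>x\<bar> powr (1 - 2 * mu) + (mu - nu) * \<bar>x\<bar> powr (-1)) \<and>
   (\<forall>x. \<bar>fF x\<bar> \<le> 2 * (mu - nu) * pi) \<and>
   (\<forall>x. x \<noteq> 0 \<longrightarrow>
      \<bar>deriv fF x\<bar> \<le> C0c mu nu * (1 + 1 / (2 * mu - 1)) * exp (4 * supnorm g) *
          (1 / (\<bar>x\<bar> powr (2 * nu) * (x\<^sup>2 + 1) powr (mu - nu))) + (mu - nu) * (1 / (x\<^sup>2 + 1)))"
proof (intro conjI allI impI)
  have b: "0 < 2 * mu - 1" using mu by simp
  have ce: "C0 * E ^ 4 / (2 * mu - 1) \<le> C0 * (1 + 1 / (2 * mu - 1)) * E ^ 4"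
  proof -
    have "C0 * (1 + 1 / (2 * mu - 1)) * E ^ 4 = C0 * E ^ 4 + C0 * E ^ 4 / (2 * mu - 1)"
      by (simp add: distrib_left distrib_right)
    moreover have "0 \<le> C0 * E ^ 4" using C0_pos E_pos by simp
    ultimately show ?thesis by linarith
  qed
  have ce2: "C0 * E ^ 4 \<le> C0 * (1 + 1 / (2 * mu - 1)) * E ^ 4"
  proof -
    have "1 \<le> 1 + 1 / (2 * mu - 1)" using b by simp
    then have "C0 * 1 \<le> C0 * (1 + 1 / (2 * mu - 1))" using C0_pos by (intro mult_left_mono) auto
    then show ?thesis using E_pos by (intro mult_right_mono) auto
  qed
  fix x :: real
  { assume x: "1 \<le> \<bar>x\<bar>"
    have "\<bar>fF x\<bar> \<le> K / (2 * mu - 1) * \<bar>x\<bar> powr (1 - 2 * mu) + a * \<bar>x\<bar> powr (-1)"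
      by (rule f_bound_large[OF x])
    also have "K / (2 * mu - 1) * \<bar>x\<bar> powr (1 - 2 * mu) \<le> C0 * (1 + 1 / (2 * mu - 1)) * E ^ 4 * \<bar>x\<bar> powr (1 - 2 * mu)"
      using ce unfolding K_def by (intro mult_right_mono) auto
    finally show "\<bar>fF x\<bar> \<le> C0c mu nu * (1 + 1 / (2 * mu - 1)) * exp (4 * supnorm g) * \<bar>x\<bar> powr (1 - 2 * mu) + (mu - nu) * \<bar>x\<bar> powr (-1)"
      by (simp add: C0_eq E4 a_def) }
  show "\<bar>fF x\<bar> \<le> 2 * (mu - nu) * pi" using f_bound_all by (simp add: a_def)
  { assume x: "x \<noteq> 0"
    have "deriv fF x = D x - a * (1 / (x\<^sup>2 + 1))" by (rule DERIV_imp_deriv[OF f_deriv[OF x]])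
    then have "\<bar>deriv fF x\<bar> \<le> C0 * E ^ 4 * w x + a * (1 / (x\<^sup>2 + 1))"
      using f_deriv_bound[OF x] by simp
    also have "C0 * E ^ 4 * w x \<le> C0 * (1 + 1 / (2 * mu - 1)) * E ^ 4 * w x"
      by (rule mult_right_mono[OF ce2]) (use w_pos[OF x] in simp)
    finally show "\<bar>deriv fF x\<bar> \<le> C0c mu nu * (1 + 1 / (2 * mu - 1)) * exp (4 * supnorm g) *
          (1 / (\<bar>x\<bar> powr (2 * nu) * (x\<^sup>2 + 1) powr (mu - nu))) + (mu - nu) * (1 / (x\<^sup>2 + 1))"
      by (simp add: C0_eq E4 a_def w_def) }
qed

lemma fF_meas: "fF \<in> borel_measurable borel"
proof -
  have [measurable]: "F \<in> borel_measurable borel" by (rule borel_measurable_continuous_onI[OF F_cont])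
  show ?thesis unfolding fF_def[abs_def] by measurable
qed

lemma part2:
  assumes M: "supnorm g \<le> M" and x: "4 \<le> \<bar>x\<bar>"
  shows "\<bar>hilbert fF x\<bar> \<le> HCc mu nu M * (\<bar>x\<bar> powr (1/2 - mu) + \<bar>x\<bar> powr (-1/2))"
proof -
  define gm where "gm = gmc mu"
  have gm: "0 < gm" "gm \<le> 1/2" "gm \<le> mu - 1/2" "gm < 1" using mu unfolding gm_def gmc_def by (auto simp: min_def)
  have e4: "exp (4 * supnorm g) \<le> exp (4 * M)" using M by simp
  define c1 where "c1 = C0c mu nu * (1 + 1 / (2 * mu - 1))"
  have c1: "0 \<le> c1" unfolding c1_def using C0_pos C0_eq mu by simp
  have C00: "0 \<le> C0c mu nu" using C0_pos C0_eq by simp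
  have fb: "\<bar>fF y\<bar> \<le> Bc mu nu M * \<bar>y\<bar> powr (-gm)" if y: "y \<noteq> 0" for y
  proof (cases "1 \<le> \<bar>y\<bar>")
    case True
    have p1: "\<bar>y\<bar> powr (1 - 2 * mu) \<le> \<bar>y\<bar> powr (-gm)" using True gm mu by (intro powr_mono) auto
    have p2: "\<bar>y\<bar> powr (-1) \<le> \<bar>y\<bar> powr (-gm)" using True gm by (intro powr_mono) auto
    have "\<bar>fF y\<bar> \<le> c1 * exp (4 * supnorm g) * \<bar>y\<bar> powr (1 - 2 * mu) + (mu - nu) * \<bar>y\<bar> powr (-1)"
      using part1 True unfolding c1_def by blast
    also have "\<dots> \<le> c1 * exp (4 * M) * \<bar>y\<bar> powr (-gm) + (mu - nu) * \<bar>y\<bar> powr (-gm)"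
      using p1 p2 e4 c1 a_pos unfolding a_def
      by (intro add_mono mult_mono mult_left_mono) auto
    also have "\<dots> \<le> Bc mu nu M * \<bar>y\<bar> powr (-gm)"
    proof -
      have eq: "Bc mu nu M * \<bar>y\<bar> powr (-gm) = c1 * exp (4 * M) * \<bar>y\<bar> powr (-gm) + (mu - nu) * \<bar>y\<bar> powr (-gm)
          + 2 * (mu - nu) * pi * \<bar>y\<bar> powr (-gm)"
        unfolding Bc_def c1_def by (simp add: distrib_right)
      have n1: "0 \<le> 2 * (mu - nu) * pi * \<bar>y\<bar> powr (-gm)" using a_pos unfolding a_def by simp
      have n2: "0 \<le> c1 * exp (4 * M) * \<bar>y\<bar> powr (-gm)" using c1 by simp
      have n3: "0 \<le> (mu - nu) * \<bar>y\<bar> powr (-gm)" using a_pos unfolding a_def by simp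
      show ?thesis unfolding eq using n1 n2 n3 by linarith
    qed
    finally show ?thesis .
  next
    case False
    have p: "1 \<le> \<bar>y\<bar> powr (-gm)" using powr_mono2'[of "-gm" "\<bar>y\<bar>" 1] False y gm by auto
    have "\<bar>fF y\<bar> \<le> 2 * (mu - nu) * pi" using part1 by blast
    also have "\<dots> \<le> 2 * (mu - nu) * pi * \<bar>y\<bar> powr (-gm)"
      using mult_left_mono[OF p, of "2 * (mu - nu) * pi"] a_pos unfolding a_def by simp
    also have "\<dots> \<le> Bc mu nu M * \<bar>y\<bar> powr (-gm)"
    proof -
      have eq: "Bc mu nu M * \<bar>y\<bar> powr (-gm) = c1 * exp (4 * M) * \<bar>y\<bar> powr (-gm) + (mu - nu) * \<bar>y\<bar> powr (-gm)
          + 2 * (mu - nu) * pi * \<bar>y\<bar> powr (-gm)"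
        unfolding Bc_def c1_def by (simp add: distrib_right)
      have n1: "0 \<le> 2 * (mu - nu) * pi * \<bar>y\<bar> powr (-gm)" using a_pos unfolding a_def by simp
      have n2: "0 \<le> c1 * exp (4 * M) * \<bar>y\<bar> powr (-gm)" using c1 by simp
      have n3: "0 \<le> (mu - nu) * \<bar>y\<bar> powr (-gm)" using a_pos unfolding a_def by simp
      show ?thesis unfolding eq using n1 n2 n3 by linarith
    qed
    finally show ?thesis .
  qed
  define f' where "f' y = D y - a * (1 / (y\<^sup>2 + 1))" for y
  have fd: "(fF has_real_derivative f' y) (at y)" if "1 \<le> \<bar>y\<bar>" for y
    unfolding f'_def using that by (intro f_deriv) auto
  have fdb: "\<bar>f' y\<bar> \<le> B'c mu nu M * \<bar>y\<bar> powr (-1-gm)" if y: "1 \<le> \<bar>y\<bar>" for y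
  proof -
    have y0: "y \<noteq> 0" using y by auto
    have w1: "w y \<le> \<bar>y\<bar> powr (-1-gm)"
      using w_le[OF y0] powr_mono[of "-2 * mu" "-1-gm" "\<bar>y\<bar>"] y gm by auto
    have s1: "1 / (y\<^sup>2 + 1) \<le> \<bar>y\<bar> powr (-1-gm)"
    proof -
      have "1 / (y\<^sup>2 + 1) \<le> 1 / y\<^sup>2" using y0 by (intro divide_left_mono) auto
      also have "1 / y\<^sup>2 = \<bar>y\<bar> powr (-2)"
        using y0 by (simp add: powr_minus divide_inverse powr_numeral[symmetric])
      also have "\<dots> \<le> \<bar>y\<bar> powr (-1-gm)" using y gm by (intro powr_mono) auto
      finally show ?thesis .
    qed
    have "\<bar>f' y\<bar> \<le> C0 * E ^ 4 * w y + a * (1 / (y\<^sup>2 + 1))"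
      unfolding f'_def by (rule f_deriv_bound[OF y0])
    also have "\<dots> \<le> C0c mu nu * exp (4 * M) * \<bar>y\<bar> powr (-1-gm) + a * \<bar>y\<bar> powr (-1-gm)"
    proof -
      have ce: "C0 * E ^ 4 \<le> C0c mu nu * exp (4 * M)" using e4 C00 by (simp add: C0_eq E4 mult_left_mono)
      have m1: "C0 * E ^ 4 * w y \<le> C0c mu nu * exp (4 * M) * \<bar>y\<bar> powr (-1-gm)"
        by (rule mult_mono[OF ce w1]) (use C00 w_pos[OF y0] in auto)
      have m2: "a * (1 / (y\<^sup>2 + 1)) \<le> a * \<bar>y\<bar> powr (-1-gm)"
        by (rule mult_left_mono[OF s1]) (use a_pos in simp)
      show ?thesis using m1 m2 by linarith
    qed
    also have "\<dots> = B'c mu nu M * \<bar>y\<bar> powr (-1-gm)"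
      unfolding B'c_def a_def by (simp add: algebra_simps)
    finally show ?thesis .
  qed
  have B0: "0 \<le> Bc mu nu M" unfolding Bc_def using c1 a_pos unfolding c1_def[symmetric] a_def by simp
  have B'0: "0 \<le> B'c mu nu M" unfolding B'c_def using C00 a_pos unfolding a_def by simp
  have H: "\<bar>hilbert fF x\<bar> \<le> (8 * Bc mu nu M / (1 - gm) + 4 * Bc mu nu M / gm + 4 * B'c mu nu M) * \<bar>x\<bar> powr (-gm)"
    by (rule hilbert_generic[OF gm(1) gm(4) B0 B'0 fF_meas fb fd fdb x])
  have HC: "8 * Bc mu nu M / (1 - gm) + 4 * Bc mu nu M / gm + 4 * B'c mu nu M = HCc mu nu M"
    by (simp add: HCc_def gm_def)
  have HC0: "0 \<le> HCc mu nu M" unfolding HC[symmetric] using B0 B'0 gm by simp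
  have xg: "\<bar>x\<bar> powr (-gm) \<le> \<bar>x\<bar> powr (1/2 - mu) + \<bar>x\<bar> powr (-1/2)"
  proof (cases "mu \<le> 1")
    case True
    then have "gm = mu - 1/2" by (simp add: gm_def gmc_def)
    then show ?thesis by simp
  next
    case False
    then have "gm = 1/2" by (simp add: gm_def gmc_def)
    then have e: "-gm = -1/2" by simp
    have "0 \<le> \<bar>x\<bar> powr (1/2 - mu)" by simp
    then show ?thesis unfolding e by linarith
  qed
  show ?thesis using H HC HC0 xg by (metis mult_left_mono order_trans)
qed

end

theorem lemma5p4:
  fixes \<mu> \<nu> :: real
  assumes "\<mu> > 1/2" and "0 < \<nu>" and "\<nu> < 1/2"
  shows
   "(\<exists>c. \<forall>g hinv \<kappa> F. g \<in> Xspace \<and> admissible \<mu> \<nu> g hinv \<kappa> F \<longrightarrow>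
        (let f = (\<lambda>x. F x - (\<mu> - \<nu>) * theta x) in
          (\<forall>x. \<bar>x\<bar> \<ge> 1 \<longrightarrow>
             \<bar>f x\<bar> \<le> c * exp (4 * supnorm g) * \<bar>x\<bar> powr (1 - 2 * \<mu>) + (\<mu> - \<nu>) * \<bar>x\<bar> powr (-1)) \<and>
          (\<forall>x. \<bar>f x\<bar> \<le> 2 * (\<mu> - \<nu>) * pi) \<and>
          (\<forall>x. x \<noteq> 0 \<longrightarrow>
             \<bar>deriv f x\<bar> \<le> c * exp (4 * supnorm g) *
                 (1 / (\<bar>x\<bar> powr (2 * \<nu>) * (x\<^sup>2 + 1) powr (\<mu> - \<nu>)))
               + (\<mu> - \<nu>) * (1 / (x\<^sup>2 + 1))))) \<and>
    (\<forall>M. \<exists>c. \<forall>g hinv \<kappa> F. g \<in> Xspace \<and> supnorm g \<le> M \<and> admissible \<mu> \<nu> g hinv \<kappa> F \<longrightarrow>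
        (\<forall>x. \<bar>x\<bar> \<ge> 4 \<longrightarrow>
           \<bar>hilbert (\<lambda>y. F y - (\<mu> - \<nu>) * theta y) x\<bar>
             \<le> c * (\<bar>x\<bar> powr (1/2 - \<mu>) + \<bar>x\<bar> powr (-1/2))))"
proof (intro conjI allI)
  show "\<exists>c. \<forall>g hinv \<kappa> F. g \<in> Xspace \<and> admissible \<mu> \<nu> g hinv \<kappa> F \<longrightarrow>
        (let f = (\<lambda>x. F x - (\<mu> - \<nu>) * theta x) in
          (\<forall>x. \<bar>x\<bar> \<ge> 1 \<longrightarrow>
             \<bar>f x\<bar> \<le> c * exp (4 * supnorm g) * \<bar>x\<bar> powr (1 - 2 * \<mu>) + (\<mu> - \<nu>) * \<bar>x\<bar> powr (-1)) \<and>
          (\<forall>x. \<bar>f x\<bar> \<le> 2 * (\<mu> - \<nu>) * pi) \<and>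
          (\<forall>x. x \<noteq> 0 \<longrightarrow>
             \<bar>deriv f x\<bar> \<le> c * exp (4 * supnorm g) *
                 (1 / (\<bar>x\<bar> powr (2 * \<nu>) * (x\<^sup>2 + 1) powr (\<mu> - \<nu>)))
               + (\<mu> - \<nu>) * (1 / (x\<^sup>2 + 1))))"
  proof (intro exI[of _ "C0c \<mu> \<nu> * (1 + 1 / (2 * \<mu> - 1))"] allI impI)
    fix g hinv \<kappa> F assume h: "g \<in> Xspace \<and> admissible \<mu> \<nu> g hinv \<kappa> F"
    interpret L \<mu> \<nu> g hinv \<kappa> F using assms h by unfold_locales auto
    have e: "(\<lambda>x. F x - (\<mu> - \<nu>) * theta x) = fF" by (simp add: fF_def a_def fun_eq_iff)
    show "let f = (\<lambda>x. F x - (\<mu> - \<nu>) * theta x) in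
          (\<forall>x. \<bar>x\<bar> \<ge> 1 \<longrightarrow>
             \<bar>f x\<bar> \<le> C0c \<mu> \<nu> * (1 + 1 / (2 * \<mu> - 1)) * exp (4 * supnorm g) * \<bar>x\<bar> powr (1 - 2 * \<mu>) + (\<mu> - \<nu>) * \<bar>x\<bar> powr (-1)) \<and>
          (\<forall>x. \<bar>f x\<bar> \<le> 2 * (\<mu> - \<nu>) * pi) \<and>
          (\<forall>x. x \<noteq> 0 \<longrightarrow>
             \<bar>deriv f x\<bar> \<le> C0c \<mu> \<nu> * (1 + 1 / (2 * \<mu> - 1)) * exp (4 * supnorm g) *
                 (1 / (\<bar>x\<bar> powr (2 * \<nu>) * (x\<^sup>2 + 1) powr (\<mu> - \<nu>)))
               + (\<mu> - \<nu>) * (1 / (x\<^sup>2 + 1)))"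
      unfolding Let_def e by (rule part1)
  qed
next
  fix M
  show "\<exists>c. \<forall>g hinv \<kappa> F. g \<in> Xspace \<and> supnorm g \<le> M \<and> admissible \<mu> \<nu> g hinv \<kappa> F \<longrightarrow>
        (\<forall>x. \<bar>x\<bar> \<ge> 4 \<longrightarrow>
           \<bar>hilbert (\<lambda>y. F y - (\<mu> - \<nu>) * theta y) x\<bar>
             \<le> c * (\<bar>x\<bar> powr (1/2 - \<mu>) + \<bar>x\<bar> powr (-1/2)))"
  proof (intro exI[of _ "HCc \<mu> \<nu> M"] allI impI)
    fix g hinv \<kappa> F and x :: real assume h: "g \<in> Xspace \<and> supnorm g \<le> M \<and> admissible \<mu> \<nu> g hinv \<kappa> F"
      and x: "4 \<le> \<bar>x\<bar>"
    interpret L \<mu> \<nu> g hinv \<kappa> F using assms h by unfold_locales auto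
    have e: "(\<lambda>x. F x - (\<mu> - \<nu>) * theta x) = fF" by (simp add: fF_def a_def fun_eq_iff)
    show "\<bar>hilbert (\<lambda>y. F y - (\<mu> - \<nu>) * theta y) x\<bar> \<le> HCc \<mu> \<nu> M * (\<bar>x\<bar> powr (1/2 - \<mu>) + \<bar>x\<bar> powr (-1/2))"
      unfolding e using part2[of M x] h x by simp
  qed
qed


end
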